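(* Suppose $F(i)=(i+1/2)^a$ on $[-1/2,1/2]$ for some $a>0$. Fix $\sigma>0$, and for $Q\in(0,1/2)$ set $q_1=q_2=Q$, $q_H=\frac{(1-2Q)\sigma}{1+\sigma}$, $q_L=\frac{1-2Q}{1+\sigma}$ (so $\sigma=q_H/q_L$). Then, as $Q\to0$ (that is, for all sufficiently small $Q>0$), the value $V(R)$ as a function of $R\in(0,1)$ is (i) decreasing in $R$ if $\sigma\le\min\left\{\frac{1-Q(a+1)}{a-Q(a+1)},\frac{a-Q(a+1)}{1-Q(a+1)}\right\}$; (ii) increasing in $R$ if $\sigma\ge\max\left\{\frac{1-Q(a+1)}{a-Q(a+1)},\frac{a-Q(a+1)}{1-Q(a+1)}\right\}$; (iii) maximized at some $R^*\in(0,1)$ otherwise.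
   Context: Setting. Consumer types are $i\in[-1/2,1/2]$, distributed according to a continuous cumulative distribution function $F$ with full support on $[-1/2,1/2]$. A product has a quality vector $(Q_1,Q_2)\in\{0,1\}^2$; a type-$i$ consumer gets payoff $(1/2+i)Q_1+(1/2-i)Q_2$ from it. The versions $(1,1),(1,0),(0,1),(0,0)$ have prior probabilities $q_H,q_1,q_2,q_L$ respectively, all strictly positive and summing to $1$. One product carries a recommendation from a sender whose type is drawn from $F$ independently of the product; given a threshold $R\in(0,1)$, the sender gives a buy recommendation $B$ if her payoff from the product is at least $R$ and a don't-buy recommendation $D$ otherwise. Let $\phi_1(R)=1-F(R-1/2)$, $\phi_2(R)=F(1/2-R)$, $\pi^B=q_H+q_1\phi_1(R)+q_2\phi_2(R)$, $\pi^D=1-\pi^B$. Posteriors: $p^B_H=q_H/\pi^B$, $p^B_1=q_1\phi_1(R)/\pi^B$, $p^B_2=q_2\phi_2(R)/\pi^B$, $p^B_L=0$; $p^D_H=0$, $p^D_1=q_1(1-\phi_1(R))/\pi^D$, $p^D_2=q_2(1-\phi_2(R))/\pi^D$, $p^D_L=q_L/\pi^D$. For $r\in\{B,D\}$ let $U_i^r=p_H^r+(1/2+i)p_1^r+(1/2-i)p_2^r$ and $U_i^0=q_H+(1/2+i)q_1+(1/2-i)q_2$. The value of the recommendation system is $V(R)=\pi^B\int_{-1/2}^{1/2}\max\{U_i^B-U_i^0,0\}\,dF(i)+\pi^D\int_{-1/2}^{1/2}\max\{U_i^D-U_i^0,0\}\,dF(i)$. *)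

theory Defs
  imports "HOL-Analysis.Analysis"
begin

text \<open>Consumer/sender types live in [-1/2,1/2]; the CDF F is extended by 0 below
  and 1 above. Integration dF(i) is against the Lebesgue-Stieltjes measure of F.\<close>

definition phi1 :: "(real \<Rightarrow> real) \<Rightarrow> real \<Rightarrow> real" where
  "phi1 F R = 1 - F (R - 1/2)"

definition phi2 :: "(real \<Rightarrow> real) \<Rightarrow> real \<Rightarrow> real" where
  "phi2 F R = F (1/2 - R)"

definition piB :: "(real \<Rightarrow> real) \<Rightarrow> real \<Rightarrow> real \<Rightarrow> real \<Rightarrow> real \<Rightarrow> real" where
  "piB F qH q1 q2 R = qH + q1 * phi1 F R + q2 * phi2 F R"

definition piD :: "(real \<Rightarrow> real) \<Rightarrow> real \<Rightarrow> real \<Rightarrow> real \<Rightarrow> real \<Rightarrow> real" where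
  "piD F qH q1 q2 R = 1 - piB F qH q1 q2 R"

definition UB :: "(real \<Rightarrow> real) \<Rightarrow> real \<Rightarrow> real \<Rightarrow> real \<Rightarrow> real \<Rightarrow> real \<Rightarrow> real" where
  "UB F qH q1 q2 R i =
     (let p = piB F qH q1 q2 R;
          pH = qH / p; p1 = q1 * phi1 F R / p; p2 = q2 * phi2 F R / p
      in pH + (1/2 + i) * p1 + (1/2 - i) * p2)"

definition UD :: "(real \<Rightarrow> real) \<Rightarrow> real \<Rightarrow> real \<Rightarrow> real \<Rightarrow> real \<Rightarrow> real \<Rightarrow> real" where
  "UD F qH q1 q2 R i =
     (let p = piD F qH q1 q2 R;
          pH = 0; p1 = q1 * (1 - phi1 F R) / p; p2 = q2 * (1 - phi2 F R) / p
      in pH + (1/2 + i) * p1 + (1/2 - i) * p2)"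

definition U0 :: "real \<Rightarrow> real \<Rightarrow> real \<Rightarrow> real \<Rightarrow> real" where
  "U0 qH q1 q2 i = qH + (1/2 + i) * q1 + (1/2 - i) * q2"

definition rec_value :: "(real \<Rightarrow> real) \<Rightarrow> real \<Rightarrow> real \<Rightarrow> real \<Rightarrow> real \<Rightarrow> real" where
  "rec_value F qH q1 q2 R =
     piB F qH q1 q2 R *
       set_lebesgue_integral (interval_measure F) {-1/2..1/2}
         (\<lambda>i. max (UB F qH q1 q2 R i - U0 qH q1 q2 i) 0)
   + piD F qH q1 q2 R *
       set_lebesgue_integral (interval_measure F) {-1/2..1/2}
         (\<lambda>i. max (UD F qH q1 q2 R i - U0 qH q1 q2 i) 0)"

definition power_cdf :: "real \<Rightarrow> real \<Rightarrow> real" where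
  "power_cdf a x = (if x < -1/2 then 0 else if x > 1/2 then 1 else (x + 1/2) powr a)"

end

theory Submission
  imports Defs "HOL-Probability.Probability"
begin


lemma power_cdf_alt:
  assumes "a > 0"
  shows "power_cdf a = (\<lambda>x. (max 0 (min 1 (x + 1/2))) powr a)"
  using assms by (auto simp: power_cdf_def fun_eq_iff)

lemma power_cdf_mono:
  assumes "a > 0" "x \<le> y" shows "power_cdf a x \<le> power_cdf a y"
  unfolding power_cdf_alt[OF assms(1)]
  by (rule powr_mono2) (use assms in auto)

lemma power_cdf_cont:
  assumes "a > 0" shows "continuous_on UNIV (power_cdf a)"
  unfolding power_cdf_alt[OF assms(1)]
  by (intro continuous_on_powr' continuous_intros) (use assms in auto)

lemma power_cdf_right_cont:
  assumes "a > 0" shows "continuous (at_right x) (power_cdf a)"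
  using power_cdf_cont[OF assms] 
  by (metis continuous_on_eq_continuous_within continuous_within_subset iso_tuple_UNIV_I top_greatest)

lemma power_cdf_bot:
  assumes "a > 0" shows "(power_cdf a \<longlongrightarrow> 0) at_bot"
proof -
  have "eventually (\<lambda>x. 0 = power_cdf a x) at_bot"
    unfolding eventually_at_bot_linorder
    by (rule exI[of _ "-1"]) (auto simp: power_cdf_def)
  then show ?thesis by (rule tendsto_eventually[OF eventually_mono]) simp
qed

lemma power_cdf_top:
  assumes "a > 0" shows "(power_cdf a \<longlongrightarrow> 1) at_top"
proof -
  have "eventually (\<lambda>x. 1 = power_cdf a x) at_top"
    unfolding eventually_at_top_linorder
    by (rule exI[of _ "1"]) (auto simp: power_cdf_def)
  then show ?thesis by (rule tendsto_eventually[OF eventually_mono]) simp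
qed

definition UU :: "real measure" where "UU = uniform_measure lborel {0..1}"

lemma UU_prob: "prob_space UU"
  unfolding UU_def by (rule prob_space_uniform_measure) auto

lemma AE_UU: "(AE x in UU. P x) \<longleftrightarrow> (AE x in lborel. x \<in> {0..1} \<longrightarrow> P x)"
  unfolding UU_def by (rule AE_uniform_measure) auto

lemma sets_UU[simp, measurable_cong]: "sets UU = sets borel"
  unfolding UU_def by simp

lemma space_UU[simp]: "space UU = UNIV"
  unfolding UU_def by simp

definition GG :: "real \<Rightarrow> real \<Rightarrow> real" where "GG a u = u powr (1/a) - 1/2"

lemma GG_meas[measurable]: "GG a \<in> borel_measurable borel"
  unfolding GG_def by measurable

lemma measure_UU: "B \<in> sets borel \<Longrightarrow> measure UU B = measure lborel ({0..1} \<inter> B)"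
  unfolding UU_def by (subst measure_uniform_measure) auto

lemma GG_le_iff:
  fixes a u c :: real
  assumes a: "a > 0" and u: "0 \<le> u" and c: "0 \<le> c"
  shows "u powr (1/a) \<le> c \<longleftrightarrow> u \<le> c powr a"
proof
  assume "u powr (1/a) \<le> c"
  then have "(u powr (1/a)) powr a \<le> c powr a" using powr_mono2[of a "u powr (1/a)" c] a by auto
  then show "u \<le> c powr a" using a u by (simp add: powr_powr)
next
  assume "u \<le> c powr a"
  then have "u powr (1/a) \<le> (c powr a) powr (1/a)" using powr_mono2[of "1/a" u "c powr a"] a u by auto
  then show "u powr (1/a) \<le> c" using a c by (simp add: powr_powr)
qed

lemma cdf_distr_GG:
  assumes a: "a > 0"
  shows "cdf (distr UU borel (GG a)) x = power_cdf a x"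
proof -
  have "cdf (distr UU borel (GG a)) x = measure UU (GG a -` {..x})"
    unfolding cdf_def by (subst measure_distr) auto
  also have "\<dots> = measure lborel ({0..1} \<inter> GG a -` {..x})"
    by (rule measure_UU) (use measurable_sets[OF GG_meas[of a], of "{..x}"] in simp)
  also have "\<dots> = power_cdf a x"
  proof (cases "x < -1/2")
    case True
    have "{0..1} \<inter> GG a -` {..x} = {}"
    proof -
      have "\<not> GG a u \<le> x" for u using True powr_ge_zero[of u "1/a"] unfolding GG_def by linarith
      then show ?thesis by auto
    qed
    then show ?thesis using True by (simp add: power_cdf_def)
  next
    case False
    show ?thesis
    proof (cases "x > 1/2")
      case True
      have "{0..1} \<inter> GG a -` {..x} = {0..1}"
        proof -
        have "u \<in> {0..1} \<Longrightarrow> GG a u \<le> x" for u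
          using True powr_le1[of "1/a" u] a unfolding GG_def by auto
        then show ?thesis by auto
      qed
      then show ?thesis using True by (simp add: power_cdf_def)
    next
      case F2: False
      have "{0..1} \<inter> GG a -` {..x} = {0..(x+1/2) powr a}"
      proof (intro set_eqI iffI)
        fix u assume "u \<in> {0..1} \<inter> GG a -` {..x}"
        then show "u \<in> {0..(x+1/2) powr a}"
          using GG_le_iff[OF a, of u "x+1/2"] False by (auto simp: GG_def)
      next
        fix u assume u: "u \<in> {0..(x+1/2) powr a}"
        have "(x+1/2) powr a \<le> 1" using False F2 a by (intro powr_le1) auto
        then show "u \<in> {0..1} \<inter> GG a -` {..x}"
          using u GG_le_iff[OF a, of u "x+1/2"] False by (auto simp: GG_def)
      qed
      then show ?thesis using False F2 by (simp add: power_cdf_def)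
    qed
  qed
  finally show ?thesis .
qed

lemma interval_measure_eq:
  assumes a: "a > 0"
  shows "interval_measure (power_cdf a) = distr UU borel (GG a)"
proof (rule cdf_unique)
  show "real_distribution (interval_measure (power_cdf a))"
    by (rule real_distribution_interval_measure)
       (use a power_cdf_mono power_cdf_right_cont power_cdf_bot power_cdf_top in auto)
  show "real_distribution (distr UU borel (GG a))"
    by (rule prob_space.real_distribution_distr[OF UU_prob]) auto
  show "cdf (interval_measure (power_cdf a)) = cdf (distr UU borel (GG a))"
    using cdf_distr_GG[OF a]
    by (subst cdf_interval_measure) 
       (use a power_cdf_mono power_cdf_right_cont power_cdf_bot in auto)
qed

lemma UU_density: "UU = density lborel (\<lambda>x. ennreal (indicator {0..1} x))"
  unfolding UU_def uniform_measure_def by (simp add: ennreal_indicator divide_ennreal_def)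

lemma integral_UU:
  fixes f :: "real \<Rightarrow> real"
  assumes "continuous_on {0..1} f" and [measurable]: "f \<in> borel_measurable borel"
  shows "integral\<^sup>L UU f = integral {0..1} f"
proof -
  have "integral\<^sup>L UU f = integral\<^sup>L lborel (\<lambda>x. indicator {0..1} x *\<^sub>R f x)"
    unfolding UU_density
    by (rule integral_density[of f lborel "indicator {0..1}"]) auto
  also have "\<dots> = integral {0..1} f"
    using set_borel_integral_eq_integral(2)[of "{0..1}" f] borel_integrable_compact[OF _ assms(1)]
    by (simp add: set_integrable_def set_lebesgue_integral_def)
  finally show ?thesis .
qed

lemma integral_UU_powr:
  assumes "r > 0"
  shows "integral\<^sup>L UU (\<lambda>u. u powr r) = 1 / (r + 1)"
proof -
  have "integral\<^sup>L UU (\<lambda>u. u powr r) = integral {0..1} (\<lambda>u. u powr r)"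
  proof (rule integral_UU)
    show "continuous_on {0..1} (\<lambda>u::real. u powr r)"
      by (rule continuous_on_powr') (use assms in \<open>auto intro: continuous_intros\<close>)
  qed measurable
  also have "\<dots> = 1 / (r + 1)"
    using has_integral_powr_from_0[of r 1] assms by (simp add: integral_unique)
  finally show ?thesis .
qed

lemma int_lin:
  fixes a c d :: real
  assumes a: "a > 0"
  shows "set_lebesgue_integral (interval_measure (power_cdf a)) {-1/2..1/2} (\<lambda>i. c + d * i)
         = c + d * (a / (a + 1) - 1/2)"
proof -
  interpret P: prob_space UU by (rule UU_prob)
  let ?S = "{-1/2..1/2::real}"
  have "set_lebesgue_integral (interval_measure (power_cdf a)) ?S (\<lambda>i. c + d * i)
      = integral\<^sup>L (distr UU borel (GG a)) (\<lambda>i. indicator ?S i *\<^sub>R (c + d * i))"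
    unfolding set_lebesgue_integral_def interval_measure_eq[OF a] ..
  also have "\<dots> = integral\<^sup>L UU (\<lambda>u. indicator ?S (GG a u) *\<^sub>R (c + d * GG a u))"
    by (rule integral_distr) auto
  also have "\<dots> = integral\<^sup>L UU (\<lambda>u. (c - d/2) + d * u powr (1/a))"
  proof (rule integral_cong_AE)
    show "AE u in UU. indicator ?S (GG a u) *\<^sub>R (c + d * GG a u) = (c - d/2) + d * u powr (1/a)"
      unfolding AE_UU
    proof (rule AE_I2, rule impI)
      fix u :: real assume u: "u \<in> {0..1}"
      have "u powr (1/a) \<le> 1" using u a by (intro powr_le1) auto
      moreover have "0 \<le> u powr (1/a)" by simp
      ultimately have "GG a u \<in> ?S" unfolding GG_def by auto
      then show "indicator ?S (GG a u) *\<^sub>R (c + d * GG a u) = (c - d/2) + d * u powr (1/a)"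
        by (simp add: GG_def algebra_simps)
    qed
  qed (auto simp: GG_def)
  also have "\<dots> = (c - d/2) + d * integral\<^sup>L UU (\<lambda>u. u powr (1/a))"
  proof -
    have int: "integrable UU (\<lambda>u. u powr (1/a))"
    proof (rule P.integrable_const_bound[where B=1])
      show "AE u in UU. norm (u powr (1/a)) \<le> 1"
        unfolding AE_UU by (rule AE_I2) (use a in \<open>auto intro: powr_le1\<close>)
    qed measurable
    show ?thesis using int P.prob_space by simp
  qed
  also have "\<dots> = c + d * (a / (a + 1) - 1/2)"
  proof -
    have "1 / (1/a + 1) = a / (a + 1)" using a by (simp add: field_simps)
    then show ?thesis using integral_UU_powr[of "1/a"] a by (simp add: algebra_simps)
  qed
  finally show ?thesis .
qed

lemma V_formula:
  fixes a qH Q R :: real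
  assumes a: "a > 0" and qH: "qH > 0" and Q: "Q > 0" and q1: "qH + 2*Q < 1"
    and cond: "(qH + 2*Q) * (qH + Q) \<le> qH"
    and R: "0 < R" "R < 1"
  shows "rec_value (power_cdf a) qH Q Q R =
     qH - qH * (qH + Q) + Q * (a/(a+1) - qH - Q)
     + Q * ((1/(a+1) - qH - Q) * (1 - R) powr a - (a/(a+1) - qH - Q) * R powr a)"
proof -
  let ?F = "power_cdf a"
  let ?S = "{-1/2..1/2::real}"
  define x where "x = 1 - R powr a"
  define y where "y = (1 - R) powr a"
  have phi1: "phi1 ?F R = x" using R by (simp add: phi1_def power_cdf_def x_def)
  have phi2: "phi2 ?F R = y" using R by (simp add: phi2_def power_cdf_def y_def)
  have x01: "0 \<le> x" "x \<le> 1" using R a powr_le1[of a R] by (auto simp: x_def)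
  have y01: "0 \<le> y" "y \<le> 1" using R a powr_le1[of a "1-R"] by (auto simp: y_def)
  define p where "p = qH + Q * x + Q * y"
  have pB: "piB ?F qH Q Q R = p" by (simp add: piB_def phi1 phi2 p_def)
  have pD: "piD ?F qH Q Q R = 1 - p" by (simp add: piD_def pB)
  have ppos: "p > 0" using qH Q x01 y01 by (simp add: p_def add_pos_nonneg)
  have pup: "p \<le> qH + 2 * Q" using Q x01 y01 unfolding p_def
    by (smt (verit) mult_left_le)
  have pD_pos: "1 - p > 0" using pup q1 by linarith
  define al where "al = (qH + Q*(x+y)/2)/p - qH - Q"
  define be where "be = Q*(x-y)/p"
  have U0: "U0 qH Q Q i = qH + Q" for i by (simp add: U0_def algebra_simps)
  have UBe: "UB ?F qH Q Q R i = (qH + (1/2+i)*Q*x + (1/2-i)*Q*y) / p" for i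
    by (simp add: UB_def Let_def phi1 phi2 pB add_divide_distrib)
  have UDe: "UD ?F qH Q Q R i = ((1/2+i)*Q*(1-x) + (1/2-i)*Q*(1-y)) / (1 - p)" for i
    by (simp add: UD_def Let_def phi1 phi2 pD add_divide_distrib)
  have UB: "UB ?F qH Q Q R i - U0 qH Q Q i = al + be * i" for i
  proof -
    have "(qH + (1/2+i)*Q*x + (1/2-i)*Q*y) = (qH + Q*(x+y)/2) + i * (Q*(x-y))"
      by (simp add: algebra_simps)
    then show ?thesis unfolding UBe U0 al_def be_def
      using ppos by (simp add: field_simps)
  qed
  have UD: "(1 - p) * (UD ?F qH Q Q R i - U0 qH Q Q i) = - (p * (UB ?F qH Q Q R i - U0 qH Q Q i))" for i
  proof -
    have e1: "(1 - p) * (UD ?F qH Q Q R i - U0 qH Q Q i) = ((1/2+i)*Q*(1-x) + (1/2-i)*Q*(1-y)) - (1-p)*(qH+Q)"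
      unfolding UDe U0 using pD_pos by (simp add: right_diff_distrib)
    have e2: "p * (UB ?F qH Q Q R i - U0 qH Q Q i) = (qH + (1/2+i)*Q*x + (1/2-i)*Q*y) - p*(qH+Q)"
      unfolding UBe U0 using ppos by (simp add: right_diff_distrib)
    have e3: "((1/2+i)*Q*(1-x) + (1/2-i)*Q*(1-y)) - (1-p)*(qH+Q) = - ((qH + (1/2+i)*Q*x + (1/2-i)*Q*y) - p*(qH+Q))"
      by (simp add: p_def field_simps)
    show ?thesis unfolding e1 e2 e3 ..
  qed
  have UBpos: "UB ?F qH Q Q R i - U0 qH Q Q i \<ge> 0" if i: "i \<in> ?S" for i
  proof -
    have "p * (UB ?F qH Q Q R i - U0 qH Q Q i) = qH + (1/2+i)*Q*x + (1/2-i)*Q*y - p*(qH+Q)"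
      unfolding UBe U0 using ppos by (simp add: right_diff_distrib)
    also have "\<dots> \<ge> 0"
    proof -
      have "(1/2+i)*Q*x \<ge> 0" "(1/2-i)*Q*y \<ge> 0" using i Q x01 y01 by auto
      moreover have "p*(qH+Q) \<le> (qH + 2*Q)*(qH+Q)" using pup qH Q by (intro mult_right_mono) auto
      ultimately show ?thesis using cond by linarith
    qed
    finally show ?thesis using ppos by (simp add: zero_le_mult_iff)
  qed
  have UDneg: "UD ?F qH Q Q R i - U0 qH Q Q i \<le> 0" if i: "i \<in> ?S" for i
  proof -
    have "(1 - p) * (UD ?F qH Q Q R i - U0 qH Q Q i) \<le> 0"
      unfolding UD using UBpos[OF i] ppos by simp
    then show ?thesis using pD_pos by (simp add: mult_le_0_iff)
  qed
  have I1: "set_lebesgue_integral (interval_measure ?F) ?S (\<lambda>i. max (UB ?F qH Q Q R i - U0 qH Q Q i) 0)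
      = set_lebesgue_integral (interval_measure ?F) ?S (\<lambda>i. al + be * i)"
    by (rule set_lebesgue_integral_cong) (use UBpos UB in auto)
  have I2: "set_lebesgue_integral (interval_measure ?F) ?S (\<lambda>i. max (UD ?F qH Q Q R i - U0 qH Q Q i) 0)
      = set_lebesgue_integral (interval_measure ?F) ?S (\<lambda>i. 0 + 0 * i)"
    by (rule set_lebesgue_integral_cong) (use UDneg in auto)
  have "rec_value ?F qH Q Q R = p * (al + be * (a/(a+1) - 1/2))"
    unfolding rec_value_def I1 I2 int_lin[OF a] pB pD by simp
  also have "\<dots> = qH - qH * (qH + Q) + Q * (a/(a+1) - qH - Q)
     + Q * ((1/(a+1) - qH - Q) * (1 - R) powr a - (a/(a+1) - qH - Q) * R powr a)"
  proof -
    have gen: "p * (al + be * m) = qH + Q*(x+y)/2 - p*(qH+Q) + Q*(x-y)*m" for m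
      using ppos unfolding al_def be_def by (simp add: field_simps)
    have "p * (al + be * (a/(a+1) - 1/2)) = qH + Q*(x+y)/2 - p*(qH+Q) + Q*(x-y)*(a/(a+1) - 1/2)"
      by (rule gen)
    also have "\<dots> = qH - qH * (qH + Q) + Q * (a/(a+1) - qH - Q)
     + Q * ((1/(a+1) - qH - Q) * y - (a/(a+1) - qH - Q) * R powr a)"
    proof -
      have gen2: "qH + Q*(x+y)/2 - p*(qH+Q) + Q*(x-y)*(b - 1/2) = qH - qH*(qH+Q) + Q*(b - qH - Q)
         + Q*((1 - b - qH - Q)*y - (b - qH - Q)*R powr a)" for b
        unfolding p_def x_def by (simp add: field_simps)
      have "1/(a+1) = 1 - a/(a+1)" using a by (simp add: field_simps)
      then show ?thesis using gen2[of "a/(a+1)"] by simp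
    qed
    finally show ?thesis by (simp add: y_def)
  qed
  finally show ?thesis .
qed



lemma small_powr:
  fixes e k :: real
  assumes e: "e > 0" and k: "k > 0"
  shows "\<exists>S. 0 < S \<and> S < 1 \<and> S powr e < k"
proof -
  define S where "S = min (1/2) ((k/2) powr (1/e))"
  have S0: "S > 0" using k by (simp add: S_def)
  have "S powr e \<le> ((k/2) powr (1/e)) powr e"
    using S0 e by (intro powr_mono2) (auto simp: S_def)
  also have "\<dots> = k/2" using e k by (simp add: powr_powr)
  finally have "S powr e < k" using k by linarith
  moreover have "S < 1" by (simp add: S_def)
  ultimately show ?thesis using S0 by blast
qed

lemma L1:
  fixes a p q :: real
  assumes a: "a > 1" and p: "p > 0" and q: "q > 0"
  shows "\<exists>S. 0 < S \<and> S < 1 \<and> p * S powr a < q * S"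
proof -
  obtain S where S: "0 < S" "S < 1" "S powr (a - 1) < q / p"
    using small_powr[of "a - 1" "q/p"] a p q by auto
  have "S powr a = S * S powr (a - 1)"
    using S by (simp add: powr_diff field_simps)
  then have "p * S powr a = S * (p * S powr (a - 1))" by simp
  also have "\<dots> < S * q"
    using S p by (intro mult_strict_left_mono) (auto simp: field_simps)
  finally show ?thesis using S by (auto simp: mult.commute)
qed

lemma L2:
  fixes a p q :: real
  assumes a: "a < 1" "a > 0" and p: "p > 0" and q: "q > 0"
  shows "\<exists>S. 0 < S \<and> S < 1 \<and> q * S < p * S powr a"
proof -
  obtain S where S: "0 < S" "S < 1" "S powr (1 - a) < p / q"
    using small_powr[of "1 - a" "p/q"] a p q by auto
  have "S = S powr a * S powr (1 - a)"
    using S by (simp add: powr_add[symmetric])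
  then have "q * S = S powr a * (q * S powr (1 - a))" by (metis mult.left_commute)
  also have "\<dots> < S powr a * p"
    using S q by (intro mult_strict_left_mono) (auto simp: field_simps)
  finally show ?thesis using S by (auto simp: mult.commute)
qed

lemma anti_part:
  fixes a c1 c2 K Q :: real and V :: "real \<Rightarrow> real"
  assumes a: "a > 0" and Q: "Q > 0" and c: "c1 \<ge> 0" "c2 \<ge> 0"
    and V: "\<And>R. R \<in> {0<..<1} \<Longrightarrow> V R = K + Q * (c2 * (1 - R) powr a - c1 * R powr a)"
  shows "antimono_on {0<..<1} V"
  unfolding monotone_on_def
proof (intro ballI impI)
  fix r s :: real assume r: "r \<in> {0<..<1}" and s: "s \<in> {0<..<1}" and rs: "r \<le> s"
  have "(1 - s) powr a \<le> (1 - r) powr a" using rs s a by (intro powr_mono2) auto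
  moreover have "r powr a \<le> s powr a" using rs r a by (intro powr_mono2) auto
  ultimately have "c2 * (1 - s) powr a - c1 * s powr a \<le> c2 * (1 - r) powr a - c1 * r powr a"
    using c by (smt (verit) mult_left_mono)
  then show "V s \<le> V r" using V[OF r] V[OF s] Q by (simp add: mult_left_mono)
qed

lemma mono_part:
  fixes a c1 c2 K Q :: real and V :: "real \<Rightarrow> real"
  assumes a: "a > 0" and Q: "Q > 0" and c: "c1 \<le> 0" "c2 \<le> 0"
    and V: "\<And>R. R \<in> {0<..<1} \<Longrightarrow> V R = K + Q * (c2 * (1 - R) powr a - c1 * R powr a)"
  shows "mono_on {0<..<1} V"
  unfolding monotone_on_def
proof (intro ballI impI)
  fix r s :: real assume r: "r \<in> {0<..<1}" and s: "s \<in> {0<..<1}" and rs: "r \<le> s"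
  have "(1 - s) powr a \<le> (1 - r) powr a" using rs s a by (intro powr_mono2) auto
  moreover have "r powr a \<le> s powr a" using rs r a by (intro powr_mono2) auto
  ultimately have "c2 * (1 - r) powr a - c1 * r powr a \<le> c2 * (1 - s) powr a - c1 * s powr a"
    using c by (smt (verit) mult_left_mono_neg)
  then show "V r \<le> V s" using V[OF r] V[OF s] Q by (simp add: mult_left_mono)
qed

lemma max_part:
  fixes a c1 c2 K Q :: real and V :: "real \<Rightarrow> real"
  assumes a: "a > 0" and Q: "Q > 0"
    and c: "(c1 > 0 \<and> c2 < 0 \<and> a > 1) \<or> (c1 < 0 \<and> c2 > 0 \<and> a < 1)"
    and V: "\<And>R. R \<in> {0<..<1} \<Longrightarrow> V R = K + Q * (c2 * (1 - R) powr a - c1 * R powr a)"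
  shows "\<exists>Rs\<in>{0<..<1}. \<forall>R\<in>{0<..<1}. V R \<le> V Rs"
proof -
  define h where "h R = c2 * (1 - R) powr a - c1 * R powr a" for R
  have h0: "h 0 = c2" and h1: "h 1 = - c1" using a by (auto simp: h_def)
  have ex: "\<exists>R0 R1. R0 \<in> {0<..<1} \<and> R1 \<in> {0<..<1} \<and> h R0 > h 0 \<and> h R1 > h 1"
    using c
  proof
    assume c: "c1 > 0 \<and> c2 < 0 \<and> a > 1"
    obtain S0 where S0: "0 < S0" "S0 < 1" "c1 * S0 powr a < (- c2) * S0"
      using L1[of a c1 "-c2"] c by auto
    obtain S1 where S1: "0 < S1" "S1 < 1" "(- c2) * S1 powr a < c1 * S1"
      using L1[of a "-c2" c1] c by auto
    have A: "(1 - S0) powr a \<le> 1 - S0" using S0 c by (intro powr_le_one_le) auto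
    have "h S0 - h 0 = c2 * ((1 - S0) powr a - 1) - c1 * S0 powr a" by (simp add: h_def h0 algebra_simps)
    also have "\<dots> \<ge> (- c2) * S0 - c1 * S0 powr a"
    proof -
      have "c2 * ((1 - S0) powr a - 1) \<ge> c2 * (- S0)" using A c by (intro mult_left_mono_neg) auto
      then show ?thesis by simp
    qed
    finally have r0: "h S0 > h 0" using S0 by simp
    have B: "(1 - S1) powr a \<le> 1 - S1" using S1 c by (intro powr_le_one_le) auto
    have "h (1 - S1) - h 1 = c2 * S1 powr a + c1 * (1 - (1 - S1) powr a)" by (simp add: h_def h1 algebra_simps)
    also have "\<dots> \<ge> c2 * S1 powr a + c1 * S1"
    proof -
      have "c1 * (1 - (1 - S1) powr a) \<ge> c1 * S1" using B c by (intro mult_left_mono) auto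
      then show ?thesis by simp
    qed
    finally have r1: "h (1 - S1) > h 1" using S1 by simp
    show ?thesis using r0 r1 S0 S1 by (intro exI[of _ S0] exI[of _ "1 - S1"]) auto
  next
    assume c: "c1 < 0 \<and> c2 > 0 \<and> a < 1"
    obtain S0 where S0: "0 < S0" "S0 < 1" "c2 * S0 < (- c1) * S0 powr a"
      using L2[of a "-c1" c2] c a by auto
    obtain S1 where S1: "0 < S1" "S1 < 1" "(- c1) * S1 < c2 * S1 powr a"
      using L2[of a c2 "-c1"] c a by auto
    have A: "1 - S0 \<le> (1 - S0) powr a" using S0 c powr_mono'[of a 1 "1 - S0"] by auto
    have "h S0 - h 0 = c2 * ((1 - S0) powr a - 1) - c1 * S0 powr a" by (simp add: h_def h0 algebra_simps)
    also have "\<dots> \<ge> c2 * (- S0) - c1 * S0 powr a"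
    proof -
      have "c2 * ((1 - S0) powr a - 1) \<ge> c2 * (- S0)" using A c by (intro mult_left_mono) auto
      then show ?thesis by simp
    qed
    finally have r0: "h S0 > h 0" using S0 by simp
    have B: "1 - S1 \<le> (1 - S1) powr a" using S1 c powr_mono'[of a 1 "1 - S1"] by auto
    have "h (1 - S1) - h 1 = c2 * S1 powr a + c1 * (1 - (1 - S1) powr a)" by (simp add: h_def h1 algebra_simps)
    also have "\<dots> \<ge> c2 * S1 powr a + c1 * S1"
    proof -
      have "c1 * (1 - (1 - S1) powr a) \<ge> c1 * S1" using B c by (intro mult_left_mono_neg) auto
      then show ?thesis by simp
    qed
    finally have r1: "h (1 - S1) > h 1" using S1 by simp
    show ?thesis using r0 r1 S0 S1 by (intro exI[of _ S0] exI[of _ "1 - S1"]) auto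
  qed
  then obtain R0 R1 where R01: "R0 \<in> {0<..<1}" "R1 \<in> {0<..<1}" "h R0 > h 0" "h R1 > h 1" by blast
  have cont: "continuous_on {0..1} h"
    unfolding h_def
    by (intro continuous_intros continuous_on_powr') (use a in auto)
  obtain Rs where Rs: "Rs \<in> {0..1}" "\<forall>y\<in>{0..1}. h y \<le> h Rs"
    using continuous_attains_sup[OF compact_Icc _ cont] by auto
  have "Rs \<noteq> 0" using Rs(2) R01 by (metis greaterThanLessThan_iff atLeastAtMost_iff less_imp_le not_le)
  moreover have "Rs \<noteq> 1" using Rs(2) R01 by (metis greaterThanLessThan_iff atLeastAtMost_iff less_imp_le not_le)
  ultimately have Rs': "Rs \<in> {0<..<1}" using Rs(1) by auto
  show ?thesis
  proof (intro bexI[OF _ Rs'] ballI)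
    fix R :: real assume R: "R \<in> {0<..<1}"
    have "h R \<le> h Rs" using Rs(2) R by auto
    then show "V R \<le> V Rs" using V[OF R] V[OF Rs'] Q unfolding h_def by (simp add: mult_left_mono)
  qed
qed


lemma Q_part:
  fixes a \<sigma> Q :: real
  assumes a: "a > 0" and sg: "\<sigma> > 0" and Q0: "Q > 0" and Qh: "Q < 1/2"
    and q1: "(1 - 2*Q) * \<sigma> / (1 + \<sigma>) + 2*Q < 1"
    and cond: "((1 - 2*Q) * \<sigma> / (1 + \<sigma>) + 2*Q) * ((1 - 2*Q) * \<sigma> / (1 + \<sigma>) + Q) \<le> (1 - 2*Q) * \<sigma> / (1 + \<sigma>)"
    and D1: "Q*(a+1) < a" and D2: "Q*(a+1) < 1"
  shows "let F = power_cdf a;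
        qH = (1 - 2*Q) * \<sigma> / (1 + \<sigma>);
        V = rec_value F qH Q Q;
        t1 = (1 - Q*(a+1)) / (a - Q*(a+1));
        t2 = (a - Q*(a+1)) / (1 - Q*(a+1))
    in (\<sigma> \<le> min t1 t2 \<longrightarrow> antimono_on {0<..<1} V)
     \<and> (\<sigma> \<ge> max t1 t2 \<longrightarrow> mono_on {0<..<1} V)
     \<and> (min t1 t2 < \<sigma> \<and> \<sigma> < max t1 t2 \<longrightarrow>
          (\<exists>Rs\<in>{0<..<1}. \<forall>R\<in>{0<..<1}. V R \<le> V Rs))"
proof -
  define qH where "qH = (1 - 2*Q) * \<sigma> / (1 + \<sigma>)"
  define V where "V = rec_value (power_cdf a) qH Q Q"
  define t1 where "t1 = (1 - Q*(a+1)) / (a - Q*(a+1))"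
  define t2 where "t2 = (a - Q*(a+1)) / (1 - Q*(a+1))"
  define c1 where "c1 = a/(a+1) - qH - Q"
  define c2 where "c2 = 1/(a+1) - qH - Q"
  define K where "K = qH - qH * (qH + Q) + Q * (a/(a+1) - qH - Q)"
  have qHpos: "qH > 0" using Qh sg unfolding qH_def by (simp add: field_simps)
  have VR: "V R = K + Q * (c2 * (1 - R) powr a - c1 * R powr a)" if R: "R \<in> {0<..<1}" for R
    unfolding V_def K_def c1_def c2_def
    by (rule V_formula) (use a qHpos Q0 q1 cond R in \<open>auto simp: qH_def\<close>)
  define P where "P = (a+1)*(1+\<sigma>)"
  have Ppos: "P > 0" using a sg by (simp add: P_def)
  have e1: "a/(a+1)*P = a*(1+\<sigma>)" using a unfolding P_def by simp
  have e2: "1/(a+1)*P = 1+\<sigma>" using a unfolding P_def by simp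
  have e3: "qH*P = (1-2*Q)*\<sigma>*(a+1)" using sg unfolding qH_def P_def by simp
  have c1P: "c1 * P = (a - Q*(a+1)) - \<sigma> * (1 - Q*(a+1))"
  proof -
    have "c1*P = a/(a+1)*P - qH*P - Q*P" by (simp add: c1_def left_diff_distrib)
    also have "\<dots> = a*(1+\<sigma>) - (1-2*Q)*\<sigma>*(a+1) - Q*P" unfolding e1 e3 ..
    also have "\<dots> = (a - Q*(a+1)) - \<sigma> * (1 - Q*(a+1))" by (simp add: P_def algebra_simps)
    finally show ?thesis .
  qed
  have c2P: "c2 * P = (1 - Q*(a+1)) - \<sigma> * (a - Q*(a+1))"
  proof -
    have "c2*P = 1/(a+1)*P - qH*P - Q*P" by (simp add: c2_def left_diff_distrib)
    also have "\<dots> = (1+\<sigma>) - (1-2*Q)*\<sigma>*(a+1) - Q*P" unfolding e2 e3 ..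
    also have "\<dots> = (1 - Q*(a+1)) - \<sigma> * (a - Q*(a+1))" by (simp add: P_def algebra_simps)
    finally show ?thesis .
  qed
  have d1: "a - Q*(a+1) > 0" and d2: "1 - Q*(a+1) > 0" using D1 D2 by auto
  have c1_le: "c1 \<ge> 0 \<longleftrightarrow> \<sigma> \<le> t2"
  proof -
    have "c1 \<ge> 0 \<longleftrightarrow> c1 * P \<ge> 0" using Ppos by (simp add: zero_le_mult_iff)
    also have "\<dots> \<longleftrightarrow> \<sigma> * (1 - Q*(a+1)) \<le> a - Q*(a+1)" unfolding c1P by simp
    also have "\<dots> \<longleftrightarrow> \<sigma> \<le> t2" unfolding t2_def using d2 by (simp add: pos_le_divide_eq)
    finally show ?thesis .
  qed
  have c1_lt: "c1 > 0 \<longleftrightarrow> \<sigma> < t2"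
  proof -
    have "c1 > 0 \<longleftrightarrow> c1 * P > 0" using Ppos by (simp add: zero_less_mult_iff)
    also have "\<dots> \<longleftrightarrow> \<sigma> * (1 - Q*(a+1)) < a - Q*(a+1)" unfolding c1P by simp
    also have "\<dots> \<longleftrightarrow> \<sigma> < t2" unfolding t2_def using d2 by (simp add: pos_less_divide_eq)
    finally show ?thesis .
  qed
  have c2_le: "c2 \<ge> 0 \<longleftrightarrow> \<sigma> \<le> t1"
  proof -
    have "c2 \<ge> 0 \<longleftrightarrow> c2 * P \<ge> 0" using Ppos by (simp add: zero_le_mult_iff)
    also have "\<dots> \<longleftrightarrow> \<sigma> * (a - Q*(a+1)) \<le> 1 - Q*(a+1)" unfolding c2P by simp
    also have "\<dots> \<longleftrightarrow> \<sigma> \<le> t1" unfolding t1_def using d1 by (simp add: pos_le_divide_eq)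
    finally show ?thesis .
  qed
  have c2_lt: "c2 > 0 \<longleftrightarrow> \<sigma> < t1"
  proof -
    have "c2 > 0 \<longleftrightarrow> c2 * P > 0" using Ppos by (simp add: zero_less_mult_iff)
    also have "\<dots> \<longleftrightarrow> \<sigma> * (a - Q*(a+1)) < 1 - Q*(a+1)" unfolding c2P by simp
    also have "\<dots> \<longleftrightarrow> \<sigma> < t1" unfolding t1_def using d1 by (simp add: pos_less_divide_eq)
    finally show ?thesis .
  qed
  have c12: "c1 - c2 = (a - 1)/(a + 1)" unfolding c1_def c2_def by (simp add: diff_divide_distrib)
  have part1: "\<sigma> \<le> min t1 t2 \<longrightarrow> antimono_on {0<..<1} V"
  proof
    assume "\<sigma> \<le> min t1 t2"
    then have "c1 \<ge> 0" "c2 \<ge> 0" using c1_le c2_le by auto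
    then show "antimono_on {0<..<1} V" by (rule anti_part[OF a Q0 _ _ VR])
  qed
  have part2: "\<sigma> \<ge> max t1 t2 \<longrightarrow> mono_on {0<..<1} V"
  proof
    assume "\<sigma> \<ge> max t1 t2"
    then have "c1 \<le> 0" "c2 \<le> 0" using c1_lt c2_lt by auto
    then show "mono_on {0<..<1} V" by (rule mono_part[OF a Q0 _ _ VR])
  qed
  have part3: "min t1 t2 < \<sigma> \<and> \<sigma> < max t1 t2 \<longrightarrow> (\<exists>Rs\<in>{0<..<1}. \<forall>R\<in>{0<..<1}. V R \<le> V Rs)"
  proof
    assume H: "min t1 t2 < \<sigma> \<and> \<sigma> < max t1 t2"
    have "(c1 > 0 \<and> c2 < 0 \<and> a > 1) \<or> (c1 < 0 \<and> c2 > 0 \<and> a < 1)"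
    proof (cases "t1 \<le> t2")
      case True
      then have "c1 > 0" "c2 < 0" using H c1_lt c2_le by auto
      moreover then have "(a - 1)/(a+1) > 0" using c12 by linarith
      then have "a > 1" using a by (simp add: zero_less_divide_iff)
      ultimately show ?thesis by auto
    next
      case False
      then have "c1 < 0" "c2 > 0" using H c1_le c2_lt by auto
      moreover then have "(a - 1)/(a+1) < 0" using c12 by linarith
      then have "a < 1" using a by (simp add: divide_less_0_iff)
      ultimately show ?thesis by auto
    qed
    then show "\<exists>Rs\<in>{0<..<1}. \<forall>R\<in>{0<..<1}. V R \<le> V Rs" by (rule max_part[OF a Q0 _ VR])
  qed
  show ?thesis using part1 part2 part3
    unfolding Let_def V_def qH_def t1_def t2_def by blast
qed

theorem proposition7:
  fixes a \<sigma> :: real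
  assumes "a > 0" and "\<sigma> > 0"
  shows "eventually (\<lambda>Q.
    let F = power_cdf a;
        qH = (1 - 2*Q) * \<sigma> / (1 + \<sigma>);
        V = rec_value F qH Q Q;
        t1 = (1 - Q*(a+1)) / (a - Q*(a+1));
        t2 = (a - Q*(a+1)) / (1 - Q*(a+1))
    in (\<sigma> \<le> min t1 t2 \<longrightarrow> antimono_on {0<..<1} V)
     \<and> (\<sigma> \<ge> max t1 t2 \<longrightarrow> mono_on {0<..<1} V)
     \<and> (min t1 t2 < \<sigma> \<and> \<sigma> < max t1 t2 \<longrightarrow>
          (\<exists>Rs\<in>{0<..<1}. \<forall>R\<in>{0<..<1}. V R \<le> V Rs)))
    (at_right (0::real))"
proof -
  have a: "a > 0" and sg: "\<sigma> > 0" using assms by auto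
  define s where "s = \<sigma> / (1 + \<sigma>)"
  have s0: "0 < s" and s1: "s < 1" using sg by (auto simp: s_def field_simps)
  let ?qH = "\<lambda>Q::real. (1 - 2*Q) * \<sigma> / (1 + \<sigma>)"
  have qH0: "?qH 0 = s" using sg by (simp add: s_def)
  have lim0: "((\<lambda>Q::real. Q) \<longlongrightarrow> 0) (at_right 0)" by (rule tendsto_ident_at)
  have lim1: "((\<lambda>Q. ?qH Q + 2*Q) \<longlongrightarrow> ?qH 0 + 2*0) (at_right 0)"
    by (intro tendsto_intros) (use sg in auto)
  have lim2: "((\<lambda>Q. ?qH Q - (?qH Q + 2*Q) * (?qH Q + Q)) \<longlongrightarrow> ?qH 0 - (?qH 0 + 2*0) * (?qH 0 + 0)) (at_right 0)"
    by (intro tendsto_intros) (use sg in auto)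
  have lim3: "((\<lambda>Q. Q*(a+1)) \<longlongrightarrow> 0*(a+1)) (at_right 0)"
    by (intro tendsto_intros)
  have ev0: "eventually (\<lambda>Q::real. Q > 0) (at_right 0)" by (simp add: eventually_at_right_less)
  have ev1: "eventually (\<lambda>Q::real. Q < 1/2) (at_right 0)" by (rule order_tendstoD(2)[OF lim0]) simp
  have ev2: "eventually (\<lambda>Q. ?qH Q + 2*Q < 1) (at_right 0)"
    by (rule order_tendstoD(2)[OF lim1]) (use s1 qH0 in simp)
  have ev3: "eventually (\<lambda>Q. 0 < ?qH Q - (?qH Q + 2*Q) * (?qH Q + Q)) (at_right 0)"
  proof (rule order_tendstoD(1)[OF lim2])
    have "0 < s * (1 - s)" using s0 s1 by simp
    then show "0 < ?qH 0 - (?qH 0 + 2*0) * (?qH 0 + 0)" unfolding qH0 by (simp add: algebra_simps)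
  qed
  have ev4: "eventually (\<lambda>Q. Q*(a+1) < a) (at_right 0)" by (rule order_tendstoD(2)[OF lim3]) (use a in simp)
  have ev5: "eventually (\<lambda>Q. Q*(a+1) < 1) (at_right 0)" by (rule order_tendstoD(2)[OF lim3]) simp
  show ?thesis
  proof (rule eventually_mono[OF eventually_conj[OF ev0 eventually_conj[OF ev1 eventually_conj[OF ev2 eventually_conj[OF ev3 eventually_conj[OF ev4 ev5]]]]]])
    fix Q :: real assume H: "0 < Q \<and> Q < 1/2 \<and> ?qH Q + 2*Q < 1 \<and> 0 < ?qH Q - (?qH Q + 2*Q) * (?qH Q + Q) \<and> Q*(a+1) < a \<and> Q*(a+1) < 1"
    show "let F = power_cdf a;
        qH = (1 - 2*Q) * \<sigma> / (1 + \<sigma>);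
        V = rec_value F qH Q Q;
        t1 = (1 - Q*(a+1)) / (a - Q*(a+1));
        t2 = (a - Q*(a+1)) / (1 - Q*(a+1))
    in (\<sigma> \<le> min t1 t2 \<longrightarrow> antimono_on {0<..<1} V)
     \<and> (\<sigma> \<ge> max t1 t2 \<longrightarrow> mono_on {0<..<1} V)
     \<and> (min t1 t2 < \<sigma> \<and> \<sigma> < max t1 t2 \<longrightarrow>
          (\<exists>Rs\<in>{0<..<1}. \<forall>R\<in>{0<..<1}. V R \<le> V Rs))"
      by (rule Q_part) (use a sg H in auto)
  qed
qed

end
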